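(* Let $G$ be a digraph and let $\alpha^{(n+1)}>\gamma^{(n)}>\beta^{(n-1)}$ be allowed elementary paths on $G$ (of lengths $n+1,n,n-1$) which all have the same starting vertex and all have the same end vertex. Write $\alpha=v_0v_1\cdots v_{n+1}$. Then either (a) there exists an allowed elementary $n$-path $\gamma'\neq\gamma$ with $\alpha>\gamma'>\beta$; or (b) $\beta$ is obtained from $\alpha$ by removing two subsequent vertices $v_i\to v_{i+1}$ with $1\le i\le n-1$.
   Context: A digraph $G=(V,E)$ consists of a set $V$ and $E\subseteq(V\times V)\setminus\{(v,v)\}$; $(u,v)\in E$ is written $u\to v$. An allowed elementary $n$-path is a sequence $v_0\cdots v_n$ of vertices with $v_{i-1}\to v_i\in E$ for $1\le i\le n$. For allowed elementary paths, $\gamma'<\gamma$ (equivalently $\gamma>\gamma'$) means $\gamma'$ is obtained from $\gamma$ by deleting some of its entries. *)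

theory Defs
  imports Main
begin

definition digraph :: "'a set \<Rightarrow> ('a \<times> 'a) set \<Rightarrow> bool" where
  "digraph V E \<longleftrightarrow> E \<subseteq> (V \<times> V) - {(v, v) | v. True}"

definition allowed_path :: "'a set \<Rightarrow> ('a \<times> 'a) set \<Rightarrow> nat \<Rightarrow> 'a list \<Rightarrow> bool" where
  "allowed_path V E n p \<longleftrightarrow> length p = n + 1 \<and> set p \<subseteq> V \<and>
     (\<forall>i. 1 \<le> i \<and> i \<le> n \<longrightarrow> (p ! (i - 1), p ! i) \<in> E)"

definition path_less :: "'a list \<Rightarrow> 'a list \<Rightarrow> bool" where
  "path_less q p \<longleftrightarrow> (\<exists>I. q = nths p I) \<and> q \<noteq> p"

end

theory Submission
  imports Defs "HOL-Library.Sublist"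
begin

definition del :: "nat \<Rightarrow> 'a list \<Rightarrow> 'a list" where
  "del i xs = take i xs @ drop (Suc i) xs"

lemma length_del[simp]: "i < length xs \<Longrightarrow> length (del i xs) = length xs - 1"
  by (simp add: del_def)

lemma nth_del: "i < length xs \<Longrightarrow> k < length xs - 1 \<Longrightarrow>
   del i xs ! k = (if k < i then xs ! k else xs ! Suc k)"
  by (simp add: del_def nth_append min_def)
lemma set_del: "set (del i xs) \<subseteq> set xs"
  unfolding del_def by (auto dest: in_set_takeD in_set_dropD)

lemma subseq_tl: "subseq (tl ys) ys"
  by (cases ys) auto

lemma subseq_del: "subseq (del i xs) xs"
proof -
  have d: "drop (Suc i) xs = tl (drop i xs)" by (simp add: drop_Suc tl_drop)
  have "subseq (take i xs @ drop (Suc i) xs) (take i xs @ drop i xs)"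
    unfolding subseq_append' d by (rule subseq_tl)
  then show ?thesis unfolding del_def by simp
qed

lemma subseq_del_ex: "subseq q p \<Longrightarrow> length p = Suc (length q) \<Longrightarrow> \<exists>i<length p. q = del i p"
proof (induction q p rule: list_emb.induct)
  case (list_emb_Nil ys)
  then have "length ys = 1" by simp
  then obtain y where "ys = [y]" by (metis One_nat_def length_0_conv length_Suc_conv)
  then have "0 < length ys \<and> [] = del 0 ys" by (simp add: del_def)
  then show ?case by blast
next
  case (list_emb_Cons xs ys y)
  then have "length xs = length ys" by simp
  then have "xs = ys" using list_emb_Cons(1) subseq_same_length by blast
  then have "0 < length (y#ys) \<and> xs = del 0 (y#ys)" by (simp add: del_def)
  then show ?case by blast
next
  case (list_emb_Cons2 x y xs ys)
  then have "length ys = Suc (length xs)" by simp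
  then obtain i where "i < length ys" "xs = del i ys" using list_emb_Cons2(3) by blast
  then have "Suc i < length (y#ys) \<and> x#xs = del (Suc i) (y#ys)" using list_emb_Cons2(1) by (simp add: del_def)
  then show ?case by blast
qed

lemma del_del: "j \<le> m \<Longrightarrow> Suc m < length xs \<Longrightarrow> del m (del j xs) = del j (del (Suc m) xs)"
  by (rule nth_equalityI) (simp_all add: nth_del)
lemma del_adj: "Suc p < length xs \<Longrightarrow> del p (del (Suc p) xs) = take p xs @ drop (p+2) xs"
  by (rule nth_equalityI) (simp_all add: nth_del nth_append)
lemma path_lessI: "subseq q p \<Longrightarrow> q \<noteq> p \<Longrightarrow> path_less q p"
  using subseq_conv_nths[of q p] unfolding path_less_def by simp
lemma path_lessD: "path_less q p \<Longrightarrow> subseq q p"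
  using subseq_conv_nths[of q p] unfolding path_less_def by simp

lemma nth_del2: "p < q \<Longrightarrow> q < length xs \<Longrightarrow> k < length xs - 2 \<Longrightarrow>
  del p (del q xs) ! k = (if k < p then xs ! k else if k < q - 1 then xs ! Suc k else xs ! Suc (Suc k))"
  by (auto simp: nth_del)

theorem lemma2p1:
  fixes V :: "'a set" and E :: "('a \<times> 'a) set" and n :: nat
    and \<alpha> \<gamma> \<beta> :: "'a list"
  assumes G: "digraph V E"
    and n1: "n \<ge> 1"
    and a: "allowed_path V E (n + 1) \<alpha>"
    and g: "allowed_path V E n \<gamma>"
    and b: "allowed_path V E (n - 1) \<beta>"
    and ag: "path_less \<gamma> \<alpha>"
    and gb: "path_less \<beta> \<gamma>"
    and hd: "hd \<alpha> = hd \<gamma>" "hd \<gamma> = hd \<beta>"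
    and lst: "last \<alpha> = last \<gamma>" "last \<gamma> = last \<beta>"
  shows "(\<exists>\<gamma>'. allowed_path V E n \<gamma>' \<and> \<gamma>' \<noteq> \<gamma> \<and> path_less \<gamma>' \<alpha> \<and> path_less \<beta> \<gamma>')
       \<or> (\<exists>i. 1 \<le> i \<and> i \<le> n - 1 \<and> \<beta> = take i \<alpha> @ drop (i + 2) \<alpha>)"
proof -
  have la: "length \<alpha> = n + 2" and sa: "set \<alpha> \<subseteq> V"
    and ea: "\<And>i. 1 \<le> i \<Longrightarrow> i \<le> n + 1 \<Longrightarrow> (\<alpha> ! (i - 1), \<alpha> ! i) \<in> E"
    using a unfolding allowed_path_def by auto
  have lg: "length \<gamma> = n + 1"
    and eg: "\<And>i. 1 \<le> i \<Longrightarrow> i \<le> n \<Longrightarrow> (\<gamma> ! (i - 1), \<gamma> ! i) \<in> E"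
    using g unfolding allowed_path_def by auto
  have lb: "length \<beta> = n"
    and eb: "\<And>i. 1 \<le> i \<Longrightarrow> i \<le> n - 1 \<Longrightarrow> (\<beta> ! (i - 1), \<beta> ! i) \<in> E"
    using b n1 unfolding allowed_path_def by auto
  have noloop: "\<And>x. (x, x) \<notin> E" using G unfolding digraph_def by auto
  have neq: "\<And>i. i \<le> n \<Longrightarrow> \<alpha> ! i \<noteq> \<alpha> ! Suc i"
  proof
    fix i assume "i \<le> n" "\<alpha> ! i = \<alpha> ! Suc i"
    then show False using ea[of "Suc i"] noloop by auto
  qed
  have ha: "hd \<alpha> = \<alpha> ! 0" using la by (cases \<alpha>) auto
  have hg: "hd \<gamma> = \<gamma> ! 0" using lg by (cases \<gamma>) auto
  have hb: "hd \<beta> = \<beta> ! 0" using lb n1 by (cases \<beta>) auto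
  have lta: "last \<alpha> = \<alpha> ! (n+1)" proof -
    have "\<alpha> \<noteq> []" using la by (metis list.size(3) not_one_le_zero add_is_0 zero_neq_numeral one_neq_zero)
    then show ?thesis using la by (simp add: last_conv_nth)
  qed
  have ltg: "last \<gamma> = \<gamma> ! n" proof -
    have "\<gamma> \<noteq> []" using lg by (metis list.size(3) not_one_le_zero add_is_0 zero_neq_numeral one_neq_zero)
    then show ?thesis using lg by (simp add: last_conv_nth)
  qed
  have ltb: "last \<beta> = \<beta> ! (n - 1)" proof -
    have "\<beta> \<noteq> []" using lb n1 by (metis list.size(3) not_one_le_zero add_is_0 zero_neq_numeral one_neq_zero)
    then show ?thesis using lb n1 by (simp add: last_conv_nth)
  qed
  obtain j where j: "j < n + 2" "\<gamma> = del j \<alpha>"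
    using subseq_del_ex[OF path_lessD[OF ag]] la lg by auto
  obtain m where m: "m < n + 1" "\<beta> = del m \<gamma>"
    using subseq_del_ex[OF path_lessD[OF gb]] lg lb by auto
  obtain p q where pq: "p < q" "q < n + 2" "\<beta> = del p (del q \<alpha>)"
    and gpq: "\<gamma> = del p \<alpha> \<or> \<gamma> = del q \<alpha>"
  proof (cases "m < j")
    case True
    then show ?thesis using that[of m j] j m by auto
  next
    case False
    then have "\<beta> = del j (del (Suc m) \<alpha>)" using j m del_del[of j m \<alpha>] la by auto
    then show ?thesis using that[of j "Suc m"] j m False by auto
  qed
  have nb: "\<And>k. k < n \<Longrightarrow> \<beta> ! k = (if k < p then \<alpha> ! k else if k < q - 1 then \<alpha> ! Suc k else \<alpha> ! Suc (Suc k))"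
    using nth_del2[of p q \<alpha>] pq la by auto
  show ?thesis
  proof (cases "q = Suc p")
    case True
    have p1: "1 \<le> p"
    proof (rule ccontr)
      assume "\<not> 1 \<le> p"
      then have p0: "p = 0" by simp
      show False using gpq
      proof
        assume "\<gamma> = del p \<alpha>"
        then have "\<gamma> ! 0 = \<alpha> ! 1" using p0 la by (simp add: nth_del)
        then show False using hd ha hg neq[of 0] by simp
      next
        assume gq: "\<gamma> = del q \<alpha>"
        then have "\<gamma> ! 0 = \<alpha> ! 0" "\<gamma> ! 1 = \<alpha> ! Suc (Suc 0)" using p0 True la n1 by (simp_all add: nth_del)
        moreover have "\<beta> ! 0 = \<alpha> ! Suc (Suc 0)" using nb[of 0] p0 True n1 by simp
        ultimately have "\<gamma> ! 0 = \<gamma> ! 1" using hd ha hg hb by simp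
        then show False using eg[of 1] n1 noloop by auto
      qed
    qed
    have p2: "p \<le> n - 1"
    proof (rule ccontr)
      assume "\<not> p \<le> n - 1"
      then have pn: "p = n" using pq True by simp
      show False using gpq
      proof
        assume "\<gamma> = del q \<alpha>"
        then have "\<gamma> ! n = \<alpha> ! n" using pn True la by (simp add: nth_del)
        then show False using lst lta ltg neq[of n] by simp
      next
        assume gq: "\<gamma> = del p \<alpha>"
        then have "\<gamma> ! n = \<alpha> ! (n+1)" "\<gamma> ! (n - 1) = \<alpha> ! (n - 1)" using pn la n1 by (simp_all add: nth_del)
        moreover have "\<beta> ! (n - 1) = \<alpha> ! (n - 1)" using nb[of "n - 1"] pn n1 by simp
        ultimately have "\<gamma> ! (n - 1) = \<gamma> ! n" using lst lta ltg ltb by simp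
        then show False using eg[of n] n1 noloop by auto
      qed
    qed
    have "\<beta> = take p \<alpha> @ drop (p + 2) \<alpha>" using pq True del_adj[of p \<alpha>] la by simp
    then show ?thesis using p1 p2 by blast
  next
    case False
    then have pq2: "Suc p < q" using pq by simp
    have p1: "1 \<le> p"
    proof (rule ccontr)
      assume "\<not> 1 \<le> p"
      then have "\<beta> ! 0 = \<alpha> ! 1" using nb[of 0] pq2 n1 by simp
      then show False using hd ha hb neq[of 0] by simp
    qed
    have qn: "q \<le> n"
    proof (rule ccontr)
      assume "\<not> q \<le> n"
      then have "q = n + 1" using pq by simp
      then have c1: "\<not> n - 1 < p" "n - 1 < q - 1" "n - 1 < n" using pq2 n1 by linarith+
      then have "\<beta> ! (n - 1) = \<alpha> ! Suc (n - 1)" using nb[of "n - 1"] by simp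
      then have "\<beta> ! (n - 1) = \<alpha> ! n" using n1 by simp
      then show False using lst lta ltb neq[of n] by simp
    qed
    have allow: "allowed_path V E n (del r \<alpha>)"
      if r: "1 \<le> r" "r \<le> n" and er: "(\<alpha> ! (r - 1), \<alpha> ! Suc r) \<in> E" for r
      unfolding allowed_path_def
    proof (intro conjI allI impI)
      have rl: "r < length \<alpha>" using r la by simp
      show "length (del r \<alpha>) = n + 1" using r la by simp
      have "set (del r \<alpha>) \<subseteq> set \<alpha>" by (rule set_del)
      then show "set (del r \<alpha>) \<subseteq> V" using sa by (rule order_trans)
      fix i assume i: "1 \<le> i \<and> i \<le> n"
      have i1: "i - 1 < length \<alpha> - 1" "i < length \<alpha> - 1" using i la by linarith+
      have d1: "del r \<alpha> ! (i - 1) = (if i - 1 < r then \<alpha> ! (i - 1) else \<alpha> ! Suc (i - 1))"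
        using rl i1(1) by (rule nth_del)
      have d2: "del r \<alpha> ! i = (if i < r then \<alpha> ! i else \<alpha> ! Suc i)"
        using rl i1(2) by (rule nth_del)
      consider "i < r" | "i = r" | "r < i" by linarith
      then show "(del r \<alpha> ! (i - 1), del r \<alpha> ! i) \<in> E"
      proof cases
        case 1
        then have "i - 1 < r" "i < r" by linarith+
        then have "del r \<alpha> ! (i - 1) = \<alpha> ! (i - 1)" "del r \<alpha> ! i = \<alpha> ! i" using d1 d2 by simp_all
        moreover have "(\<alpha> ! (i - 1), \<alpha> ! i) \<in> E" using ea[of i] i by simp
        ultimately show ?thesis by simp
      next
        case 2
        then have "i - 1 < r" "\<not> i < r" "i - 1 = r - 1" using i by linarith+
        then have "del r \<alpha> ! (i - 1) = \<alpha> ! (r - 1)" "del r \<alpha> ! i = \<alpha> ! Suc r" using d1 d2 \<open>i = r\<close> by simp_all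
        then show ?thesis using er by simp
      next
        case 3
        then have "\<not> i - 1 < r" "\<not> i < r" "Suc (i - 1) = i" using i by linarith+
        then have "del r \<alpha> ! (i - 1) = \<alpha> ! i" "del r \<alpha> ! i = \<alpha> ! Suc i" using d1 d2 i by simp_all
        moreover have "(\<alpha> ! (Suc i - 1), \<alpha> ! Suc i) \<in> E" using ea[of "Suc i"] i by simp
        ultimately show ?thesis by simp
      qed
    qed
    have ar: "1 \<le> p" "p \<le> n - 1" "p - 1 < n" "p - 1 < p" "p < n" "\<not> p < p" "p < q - 1"
      "1 \<le> q - 1" "q - 1 \<le> n - 1" "q - 1 - 1 = q - 2" "q - 2 < n" "\<not> q - 2 < p" "q - 2 < q - 1"
      "Suc (q - 2) = q - 1" "q - 1 < n" "\<not> q - 1 < p" "\<not> q - 1 < q - 1" "Suc (Suc (q - 1)) = Suc q"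
      using p1 pq2 qn by linarith+
    have eP: "(\<alpha> ! (p - 1), \<alpha> ! Suc p) \<in> E"
    proof -
      have "(\<beta> ! (p - 1), \<beta> ! p) \<in> E" using eb ar by blast
      moreover have "\<beta> ! (p - 1) = \<alpha> ! (p - 1)" using nb[of "p - 1"] ar by simp
      moreover have "\<beta> ! p = \<alpha> ! Suc p" using nb[of p] ar by simp
      ultimately show ?thesis by simp
    qed
    have eQ: "(\<alpha> ! (q - 1), \<alpha> ! Suc q) \<in> E"
    proof -
      have "(\<beta> ! (q - 1 - 1), \<beta> ! (q - 1)) \<in> E" using eb ar by blast
      then have "(\<beta> ! (q - 2), \<beta> ! (q - 1)) \<in> E" using ar by simp
      moreover have "\<beta> ! (q - 2) = \<alpha> ! (q - 1)" using nb[of "q - 2"] ar by simp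
      moreover have "\<beta> ! (q - 1) = \<alpha> ! Suc q" using nb[of "q - 1"] ar by simp
      ultimately show ?thesis by simp
    qed
    have AP: "allowed_path V E n (del p \<alpha>)" using ar(1) _ eP by (rule allow) (use ar in linarith)
    have AQ: "allowed_path V E n (del q \<alpha>)" using _ qn eQ by (rule allow) (use pq2 in linarith)
    have lPQ: "length (del p \<alpha>) = n + 1" "length (del q \<alpha>) = n + 1" using pq la by simp_all
    have "length (del p \<alpha>) \<noteq> length \<alpha>" "length (del q \<alpha>) \<noteq> length \<alpha>" using lPQ la by simp_all
    then have nd1: "del p \<alpha> \<noteq> \<alpha>" and nd2: "del q \<alpha> \<noteq> \<alpha>" by auto
    have LP: "path_less (del p \<alpha>) \<alpha>" "path_less (del q \<alpha>) \<alpha>"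
      using path_lessI[OF subseq_del nd1] path_lessI[OF subseq_del nd2] by simp_all
    have "del (q - 1) (del p \<alpha>) = del p (del (Suc (q - 1)) \<alpha>)"
      by (rule del_del) (use ar pq la in linarith)+
    then have "\<beta> = del (q - 1) (del p \<alpha>)" using pq(3) ar pq2 by (simp add: Suc_pred')
    then have BP: "path_less \<beta> (del p \<alpha>)"
    proof -
      assume e: "\<beta> = del (q - 1) (del p \<alpha>)"
      have "length \<beta> \<noteq> length (del p \<alpha>)" using lPQ lb by simp
      then have "\<beta> \<noteq> del p \<alpha>" by auto
      then show ?thesis unfolding e by (rule path_lessI[OF subseq_del])
    qed
    have BQ: "path_less \<beta> (del q \<alpha>)"
    proof -
      have "length \<beta> \<noteq> length (del q \<alpha>)" using lPQ lb by simp
      then have "\<beta> \<noteq> del q \<alpha>" by auto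
      then show ?thesis unfolding pq(3) by (rule path_lessI[OF subseq_del])
    qed
    have "del p \<alpha> ! p = \<alpha> ! Suc p" "del q \<alpha> ! p = \<alpha> ! p"
      using nth_del[of p \<alpha> p] nth_del[of q \<alpha> p] pq la by auto
    then have PQ: "del p \<alpha> \<noteq> del q \<alpha>" using neq[of p] pq by auto
    show ?thesis
    proof (cases "\<gamma> = del p \<alpha>")
      case True
      then have "del q \<alpha> \<noteq> \<gamma>" using PQ by simp
      then show ?thesis using AQ LP(2) BQ by blast
    next
      case False
      then show ?thesis using AP LP(1) BP by blast
    qed
  qed
qed
end
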